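(* Consider a Pandora's box problem with sequential inspection with initial state $s_0$. For every policy $\pi$, we have $J^{\pi,K}(s_0)=J^{\pi}(s_0)$ if and only if $\pi$ satisfies the following three conditions (almost surely, for every box $i$): (1) $\pi$ selects any box $i$ that it F-opened without P-opening it first whenever $V_i>\sigma_i^F$; (2) $\pi$ F-opens any P-opened box $i$ whose revealed type satisfies $\sigma_i^{F\mid T_i}>\sigma_i^P$; (3) $\pi$ selects any box $i$ that it F-opened after P-opening it whenever $V_i>\min\{\sigma_i^P,\sigma_i^{F\mid T_i}\}$.
   Context: Pandora's box problem with sequential inspection: there are $N$ independent boxes. Box $i$ has a type $T_i$ taking values in a finite set $\Gamma_i$ and a nonnegative prize $V_i$, with a known joint distribution of $(V_i,T_i)$; boxes are independent. A closed box $i$ can be F-opened (fully opened) at cost $c_i^F$, revealing $V_i$, or P-opened at cost $c_i^P$, revealing only $T_i$; a partially opened box can later be F-opened at additional cost $c_i^F$. At most one F-opened box is selected; the decision maker may stop at any time. In the initial state $s_0$ all boxes are closed. Thresholds: $\sigma_i^F$ solves $\mathbb{E}[(V_i-\sigma)^+]=c_i^F$; $\sigma_i^{F\mid t}$ solves $\mathbb{E}[(V_i-\sigma)^+\mid T_i=t]=c_i^F$; $\sigma_i^P$ solves $\mathbb{E}\big[\max\{0,-c_i^F+\mathbb{E}[(V_i-\sigma)^+\mid T_i]\}\big]=c_i^P$. For a policy $\pi$ define indicators: $\mathbb{P}_i$ = box $i$ is P-opened; $\mathbb{F}_i$ = box $i$ is F-opened directly (without a prior P-opening); $\widetilde{\mathbb{F}}_i$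 = box $i$ is F-opened after being P-opened; $\mathbb{S}_i$ = box $i$ is selected after being F-opened directly; $\widetilde{\mathbb{S}}_i$ = box $i$ is selected after being P-opened and then F-opened. The expected profit is $J^{\pi}(s_0)=\mathbb{E}\big[\sum_{i}(\mathbb{S}_iV_i-\mathbb{F}_ic_i^F-\mathbb{P}_ic_i^P)+\sum_i(\widetilde{\mathbb{S}}_iV_i-\widetilde{\mathbb{F}}_ic_i^F)\big]$. Define the capped values $K_i=\min\{V_i,\sigma_i^F\}$ and $\widetilde{K}_i=\min\{V_i,\sigma_i^P,\sigma_i^{F\mid T_i}\}$, and the free-info value $J^{\pi,K}(s_0)=\mathbb{E}\big[\sum_{i}\big(\mathbb{S}_iK_i(1-\mathbb{P}_i)+\widetilde{\mathbb{S}}_i\widetilde{K}_i\mathbb{P}_i\big)\big]$. *)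

theory Defs
  imports "HOL-Probability.Probability"
begin

text \<open>Boxes are indexed by 0,...,N-1. A realisation assigns to every box i the pair
  (V_i, T_i) :: real \<times> 't. Actions of the decision maker:\<close>

datatype action = POpen nat | FOpen nat | Sel nat | Stop

datatype 't obs = ObsType 't | ObsVal real | NoObs

type_synonym 't hist = "(action \<times> 't obs) list"

text \<open>The policy is executed on a realisation; an action that is not admissible in the current
  state (opening a box outside the range, P-opening a box that is not closed, F-opening an
  already F-opened box, selecting a box that is not F-opened) is treated as stopping.
  Since every admissible opening makes progress, 2N+1 steps suffice.\<close>

fun run :: "nat \<Rightarrow> ('t hist \<Rightarrow> action) \<Rightarrow> (nat \<Rightarrow> real \<times> 't) \<Rightarrow> nat \<Rightarrow> 't hist \<Rightarrow> 't hist" where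
  "run N \<pi> \<omega> 0 h = h"
| "run N \<pi> \<omega> (Suc k) h =
    (case \<pi> h of
       POpen i \<Rightarrow> (if i < N \<and> POpen i \<notin> fst ` set h \<and> FOpen i \<notin> fst ` set h
                  then run N \<pi> \<omega> k (h @ [(POpen i, ObsType (snd (\<omega> i)))]) else h)
     | FOpen i \<Rightarrow> (if i < N \<and> FOpen i \<notin> fst ` set h
                  then run N \<pi> \<omega> k (h @ [(FOpen i, ObsVal (fst (\<omega> i)))]) else h)
     | Sel i \<Rightarrow> (if FOpen i \<in> fst ` set h then h @ [(Sel i, NoObs)] else h)
     | Stop \<Rightarrow> h)"

definition final_hist :: "nat \<Rightarrow> ('t hist \<Rightarrow> action) \<Rightarrow> (nat \<Rightarrow> real \<times> 't) \<Rightarrow> 't hist" where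
  "final_hist N \<pi> \<omega> = run N \<pi> \<omega> (2 * N + 1) []"

definition acts :: "nat \<Rightarrow> ('t hist \<Rightarrow> action) \<Rightarrow> (nat \<Rightarrow> real \<times> 't) \<Rightarrow> action list" where
  "acts N \<pi> \<omega> = map fst (final_hist N \<pi> \<omega>)"

definition PInd :: "nat \<Rightarrow> ('t hist \<Rightarrow> action) \<Rightarrow> (nat \<Rightarrow> real \<times> 't) \<Rightarrow> nat \<Rightarrow> bool" where
  "PInd N \<pi> \<omega> i \<longleftrightarrow> POpen i \<in> set (acts N \<pi> \<omega>)"

definition FInd :: "nat \<Rightarrow> ('t hist \<Rightarrow> action) \<Rightarrow> (nat \<Rightarrow> real \<times> 't) \<Rightarrow> nat \<Rightarrow> bool" where
  "FInd N \<pi> \<omega> i \<longleftrightarrow> FOpen i \<in> set (acts N \<pi> \<omega>) \<and> \<not> PInd N \<pi> \<omega> i"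

definition FtInd :: "nat \<Rightarrow> ('t hist \<Rightarrow> action) \<Rightarrow> (nat \<Rightarrow> real \<times> 't) \<Rightarrow> nat \<Rightarrow> bool" where
  "FtInd N \<pi> \<omega> i \<longleftrightarrow> FOpen i \<in> set (acts N \<pi> \<omega>) \<and> PInd N \<pi> \<omega> i"

definition SInd :: "nat \<Rightarrow> ('t hist \<Rightarrow> action) \<Rightarrow> (nat \<Rightarrow> real \<times> 't) \<Rightarrow> nat \<Rightarrow> bool" where
  "SInd N \<pi> \<omega> i \<longleftrightarrow> Sel i \<in> set (acts N \<pi> \<omega>) \<and> \<not> PInd N \<pi> \<omega> i"

definition StInd :: "nat \<Rightarrow> ('t hist \<Rightarrow> action) \<Rightarrow> (nat \<Rightarrow> real \<times> 't) \<Rightarrow> nat \<Rightarrow> bool" where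
  "StInd N \<pi> \<omega> i \<longleftrightarrow> Sel i \<in> set (acts N \<pi> \<omega>) \<and> PInd N \<pi> \<omega> i"

abbreviation boxes :: "nat \<Rightarrow> (nat \<Rightarrow> (real \<times> 't) measure) \<Rightarrow> (nat \<Rightarrow> real \<times> 't) measure" where
  "boxes N D \<equiv> PiM {..<N} D"

text \<open>Measurability (non-anticipativity is built into the execution): the sequence of actions
  taken is a random variable.\<close>

definition policy_measurable :: "nat \<Rightarrow> (nat \<Rightarrow> (real \<times> 't) measure) \<Rightarrow> ('t hist \<Rightarrow> action) \<Rightarrow> bool" where
  "policy_measurable N D \<pi> \<longleftrightarrow> (\<lambda>\<omega>. acts N \<pi> \<omega>) \<in> measurable (boxes N D) (count_space UNIV)"

text \<open>Elementary conditional expectation of (V - s)^+ given T = t (T finitely valued).\<close>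

definition condE :: "(real \<times> 't) measure \<Rightarrow> real \<Rightarrow> 't \<Rightarrow> real" where
  "condE M s t = (\<integral>x. max 0 (fst x - s) * indicator {x. snd x = t} x \<partial>M) / measure M {x. snd x = t}"

definition J :: "nat \<Rightarrow> (nat \<Rightarrow> (real \<times> 't) measure) \<Rightarrow> (nat \<Rightarrow> real) \<Rightarrow> (nat \<Rightarrow> real)
                  \<Rightarrow> ('t hist \<Rightarrow> action) \<Rightarrow> real" where
  "J N D cF cP \<pi> = (\<integral>\<omega>. (\<Sum>i<N.
        (of_bool (SInd N \<pi> \<omega> i) * fst (\<omega> i) - of_bool (FInd N \<pi> \<omega> i) * cF i
         - of_bool (PInd N \<pi> \<omega> i) * cP i)
      + (of_bool (StInd N \<pi> \<omega> i) * fst (\<omega> i) - of_bool (FtInd N \<pi> \<omega> i) * cF i)) \<partial>boxes N D)"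

definition JK :: "nat \<Rightarrow> (nat \<Rightarrow> (real \<times> 't) measure) \<Rightarrow> (nat \<Rightarrow> real) \<Rightarrow> (nat \<Rightarrow> real)
                  \<Rightarrow> (nat \<Rightarrow> 't \<Rightarrow> real) \<Rightarrow> ('t hist \<Rightarrow> action) \<Rightarrow> real" where
  "JK N D \<sigma>F \<sigma>P \<sigma>Ft \<pi> = (\<integral>\<omega>. (\<Sum>i<N.
        of_bool (SInd N \<pi> \<omega> i) * min (fst (\<omega> i)) (\<sigma>F i) * (1 - of_bool (PInd N \<pi> \<omega> i))
      + of_bool (StInd N \<pi> \<omega> i) * min (fst (\<omega> i)) (min (\<sigma>P i) (\<sigma>Ft i (snd (\<omega> i))))
          * of_bool (PInd N \<pi> \<omega> i)) \<partial>boxes N D)"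

definition cond1 :: "nat \<Rightarrow> (nat \<Rightarrow> (real \<times> 't) measure) \<Rightarrow> (nat \<Rightarrow> real) \<Rightarrow> ('t hist \<Rightarrow> action) \<Rightarrow> bool" where
  "cond1 N D \<sigma>F \<pi> \<longleftrightarrow> (AE \<omega> in boxes N D. \<forall>i<N.
      FInd N \<pi> \<omega> i \<and> fst (\<omega> i) > \<sigma>F i \<longrightarrow> Sel i \<in> set (acts N \<pi> \<omega>))"

definition cond2 :: "nat \<Rightarrow> (nat \<Rightarrow> (real \<times> 't) measure) \<Rightarrow> (nat \<Rightarrow> real) \<Rightarrow> (nat \<Rightarrow> 't \<Rightarrow> real)
                      \<Rightarrow> ('t hist \<Rightarrow> action) \<Rightarrow> bool" where
  "cond2 N D \<sigma>P \<sigma>Ft \<pi> \<longleftrightarrow> (AE \<omega> in boxes N D. \<forall>i<N.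
      PInd N \<pi> \<omega> i \<and> \<sigma>Ft i (snd (\<omega> i)) > \<sigma>P i \<longrightarrow> FOpen i \<in> set (acts N \<pi> \<omega>))"

definition cond3 :: "nat \<Rightarrow> (nat \<Rightarrow> (real \<times> 't) measure) \<Rightarrow> (nat \<Rightarrow> real) \<Rightarrow> (nat \<Rightarrow> 't \<Rightarrow> real)
                      \<Rightarrow> ('t hist \<Rightarrow> action) \<Rightarrow> bool" where
  "cond3 N D \<sigma>P \<sigma>Ft \<pi> \<longleftrightarrow> (AE \<omega> in boxes N D. \<forall>i<N.
      FtInd N \<pi> \<omega> i \<and> fst (\<omega> i) > min (\<sigma>P i) (\<sigma>Ft i (snd (\<omega> i))) \<longrightarrow> Sel i \<in> set (acts N \<pi> \<omega>))"

end

theory Submission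
  imports Defs
begin

lemma run_prefix: "\<exists>s. run N \<pi> \<omega> k h = h @ s"
proof (induction k arbitrary: h)
  case 0 then show ?case by simp
next
  case (Suc k)
  show ?case
  proof (cases "\<pi> h")
    case (POpen j) then show ?thesis using Suc[of "h @ [(POpen j, ObsType (snd (\<omega> j)))]"] by auto
  next
    case (FOpen j) then show ?thesis using Suc[of "h @ [(FOpen j, ObsVal (fst (\<omega> j)))]"] by auto
  qed auto
qed

lemma run_noP: "FOpen i \<in> fst ` set h \<Longrightarrow>
   (POpen i \<in> fst ` set (run N \<pi> \<omega> k h)) = (POpen i \<in> fst ` set h)"
proof (induction k arbitrary: h)
  case 0 then show ?case by simp
next
  case (Suc k)
  show ?case
  proof (cases "\<pi> h")
    case (POpen j) then show ?thesis using Suc.IH[of "h @ [(POpen j, ObsType (snd (\<omega> j)))]"] Suc.prems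
      by (auto simp: image_iff)
  next
    case (FOpen j) then show ?thesis using Suc.IH[of "h @ [(FOpen j, ObsVal (fst (\<omega> j)))]"] Suc.prems
      by (auto simp: image_iff)
  qed (auto simp: image_iff)
qed

lemma run_Sel: "(Sel i \<in> fst ` set h \<longrightarrow> FOpen i \<in> fst ` set h) \<Longrightarrow>
   Sel i \<in> fst ` set (run N \<pi> \<omega> k h) \<longrightarrow> FOpen i \<in> fst ` set (run N \<pi> \<omega> k h)"
proof (induction k arbitrary: h)
  case 0 then show ?case by simp
next
  case (Suc k)
  show ?case
  proof (cases "\<pi> h")
    case (POpen j) then show ?thesis using Suc.IH[of "h @ [(POpen j, ObsType (snd (\<omega> j)))]"] Suc.prems
      by (auto simp: image_iff)
  next
    case (FOpen j) then show ?thesis using Suc.IH[of "h @ [(FOpen j, ObsVal (fst (\<omega> j)))]"] Suc.prems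
      by (auto simp: image_iff)
  qed (insert Suc.prems, auto simp: image_iff)
qed

lemma run_G:
  assumes "\<forall>j. (POpen j \<notin> B \<longrightarrow> snd (\<omega> j) = snd (\<omega>' j)) \<and> (FOpen j \<notin> B \<longrightarrow> fst (\<omega> j) = fst (\<omega>' j))"
  shows "run N \<pi> \<omega> k h = run N \<pi> \<omega>' k h \<or> (\<exists>p a ob ob' k'. a \<in> B \<and>
     run N \<pi> \<omega> k h = run N \<pi> \<omega> k' (p @ [(a, ob)]) \<and> run N \<pi> \<omega>' k h = run N \<pi> \<omega>' k' (p @ [(a, ob')]))"
proof (induction k arbitrary: h)
  case 0 then show ?case by simp
next
  case (Suc k)
  show ?case
  proof (cases "\<pi> h")
    case (POpen j)
    show ?thesis
    proof (cases "POpen j \<in> B")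
      case True then show ?thesis using POpen by fastforce
    next
      case False then show ?thesis using POpen assms Suc.IH[of "h @ [(POpen j, ObsType (snd (\<omega> j)))]"]
        by auto
    qed
  next
    case (FOpen j)
    show ?thesis
    proof (cases "FOpen j \<in> B")
      case True then show ?thesis using FOpen by fastforce
    next
      case False then show ?thesis using FOpen assms Suc.IH[of "h @ [(FOpen j, ObsVal (fst (\<omega> j)))]"]
        by auto
    qed
  qed auto
qed

lemma acts_Sel: "Sel i \<in> set (acts N \<pi> \<omega>) \<Longrightarrow> FOpen i \<in> set (acts N \<pi> \<omega>)"
  using run_Sel[of i "[]" N \<pi> \<omega> "2*N+1"] by (simp add: acts_def final_hist_def)

lemma PF_indep:
  assumes "\<forall>j. j \<noteq> i \<longrightarrow> \<omega> j = \<omega>' j"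
  shows "PInd N \<pi> \<omega> i = PInd N \<pi> \<omega>' i \<and> FInd N \<pi> \<omega> i = FInd N \<pi> \<omega>' i"
proof -
  have "run N \<pi> \<omega> (2*N+1) [] = run N \<pi> \<omega>' (2*N+1) [] \<or> (\<exists>p a ob ob' k'. a \<in> {POpen i, FOpen i} \<and>
     run N \<pi> \<omega> (2*N+1) [] = run N \<pi> \<omega> k' (p @ [(a, ob)]) \<and> run N \<pi> \<omega>' (2*N+1) [] = run N \<pi> \<omega>' k' (p @ [(a, ob')]))"
    by (rule run_G) (use assms in auto)
  then show ?thesis
  proof
    assume "run N \<pi> \<omega> (2*N+1) [] = run N \<pi> \<omega>' (2*N+1) []"
    then show ?thesis by (simp add: PInd_def FInd_def acts_def final_hist_def)
  next
    assume "\<exists>p a ob ob' k'. a \<in> {POpen i, FOpen i} \<and>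
     run N \<pi> \<omega> (2*N+1) [] = run N \<pi> \<omega> k' (p @ [(a, ob)]) \<and> run N \<pi> \<omega>' (2*N+1) [] = run N \<pi> \<omega>' k' (p @ [(a, ob')])"
    then obtain p a ob ob' k' where a: "a \<in> {POpen i, FOpen i}"
      and r: "final_hist N \<pi> \<omega> = run N \<pi> \<omega> k' (p @ [(a, ob)])"
      and r': "final_hist N \<pi> \<omega>' = run N \<pi> \<omega>' k' (p @ [(a, ob')])"
      unfolding final_hist_def by blast
    obtain s where s: "final_hist N \<pi> \<omega> = p @ [(a, ob)] @ s" using run_prefix[of N \<pi> \<omega> k' "p @ [(a, ob)]"] r by auto
    obtain s' where s': "final_hist N \<pi> \<omega>' = p @ [(a, ob')] @ s'" using run_prefix[of N \<pi> \<omega>' k' "p @ [(a, ob')]"] r' by auto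
    show ?thesis
    proof (cases "a = POpen i")
      case True
      then show ?thesis using s s' by (simp add: PInd_def FInd_def acts_def)
    next
      case False
      then have aF: "a = FOpen i" using a by auto
      have "(POpen i \<in> fst ` set (final_hist N \<pi> \<omega>)) = (POpen i \<in> fst ` set p)"
        using run_noP[of i "p @ [(a, ob)]" N \<pi> \<omega> k'] r aF by auto
      moreover have "(POpen i \<in> fst ` set (final_hist N \<pi> \<omega>')) = (POpen i \<in> fst ` set p)"
        using run_noP[of i "p @ [(a, ob')]" N \<pi> \<omega>' k'] r' aF by auto
      ultimately show ?thesis using s s' aF by (simp add: PInd_def FInd_def acts_def image_Un; blast)
    qed
  qed
qed

lemma Ft_indep:
  assumes "\<forall>j. j \<noteq> i \<longrightarrow> \<omega> j = \<omega>' j" "snd (\<omega> i) = snd (\<omega>' i)"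
  shows "FtInd N \<pi> \<omega> i = FtInd N \<pi> \<omega>' i"
proof -
  have "run N \<pi> \<omega> (2*N+1) [] = run N \<pi> \<omega>' (2*N+1) [] \<or> (\<exists>p a ob ob' k'. a \<in> {FOpen i} \<and>
     run N \<pi> \<omega> (2*N+1) [] = run N \<pi> \<omega> k' (p @ [(a, ob)]) \<and> run N \<pi> \<omega>' (2*N+1) [] = run N \<pi> \<omega>' k' (p @ [(a, ob')]))"
    by (rule run_G) (use assms in auto)
  then show ?thesis
  proof
    assume "run N \<pi> \<omega> (2*N+1) [] = run N \<pi> \<omega>' (2*N+1) []"
    then show ?thesis by (simp add: PInd_def FtInd_def acts_def final_hist_def)
  next
    assume "\<exists>p a ob ob' k'. a \<in> {FOpen i} \<and>
     run N \<pi> \<omega> (2*N+1) [] = run N \<pi> \<omega> k' (p @ [(a, ob)]) \<and> run N \<pi> \<omega>' (2*N+1) [] = run N \<pi> \<omega>' k' (p @ [(a, ob')])"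
    then obtain p ob ob' k' where
      r: "final_hist N \<pi> \<omega> = run N \<pi> \<omega> k' (p @ [(FOpen i, ob)])"
      and r': "final_hist N \<pi> \<omega>' = run N \<pi> \<omega>' k' (p @ [(FOpen i, ob')])"
      unfolding final_hist_def by blast
    obtain s where s: "final_hist N \<pi> \<omega> = p @ [(FOpen i, ob)] @ s" using run_prefix[of N \<pi> \<omega> k' "p @ [(FOpen i, ob)]"] r by auto
    obtain s' where s': "final_hist N \<pi> \<omega>' = p @ [(FOpen i, ob')] @ s'" using run_prefix[of N \<pi> \<omega>' k' "p @ [(FOpen i, ob')]"] r' by auto
    have "(POpen i \<in> fst ` set (final_hist N \<pi> \<omega>)) = (POpen i \<in> fst ` set p)"
      using run_noP[of i "p @ [(FOpen i, ob)]" N \<pi> \<omega> k'] r by auto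
    moreover have "(POpen i \<in> fst ` set (final_hist N \<pi> \<omega>')) = (POpen i \<in> fst ` set p)"
      using run_noP[of i "p @ [(FOpen i, ob')]" N \<pi> \<omega>' k'] r' by auto
    ultimately show ?thesis using s s' by (simp add: PInd_def FtInd_def acts_def image_Un; blast)
  qed
qed


lemma meas_snd:
  fixes Mi :: "(real \<times> 't) measure" and \<phi> :: "'t \<Rightarrow> real"
  assumes "sets Mi = sets (borel \<Otimes>\<^sub>M count_space UNIV)"
  shows "(\<lambda>y. \<phi> (snd y) :: real) \<in> borel_measurable Mi"
proof -
  have "(\<lambda>y. \<phi> (snd y) :: real) \<in> borel_measurable (borel \<Otimes>\<^sub>M (count_space UNIV :: 't measure))"
    by (rule measurable_compose[OF measurable_snd]) simp
  then show ?thesis using measurable_cong_sets[OF assms refl] by blast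
qed

lemma meas_fst:
  assumes "sets Mi = sets (borel \<Otimes>\<^sub>M (count_space UNIV :: 't measure))"
  shows "(fst :: real \<times> 't \<Rightarrow> real) \<in> borel_measurable Mi"
proof -
  have "(fst :: real \<times> 't \<Rightarrow> real) \<in> borel_measurable (borel \<Otimes>\<^sub>M (count_space UNIV :: 't measure))"
    by simp
  then show ?thesis using measurable_cong_sets[OF assms refl] by blast
qed

lemma sets_snd:
  assumes "sets Mi = sets (borel \<Otimes>\<^sub>M (count_space UNIV :: 't measure))"
  shows "{y :: real \<times> 't. Q (snd y)} \<in> sets Mi"
proof -
  have "(\<lambda>y. of_bool (Q (snd y)) :: real) \<in> borel_measurable Mi" by (rule meas_snd[OF assms])
  then have "{y \<in> space Mi. (of_bool (Q (snd y)) :: real) = 1} \<in> sets Mi" by measurable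
  moreover have "space Mi = UNIV" using sets_eq_imp_space_eq[OF assms] by (simp add: space_pair_measure)
  ultimately show ?thesis by simp
qed

lemma integrable_fun_snd:
  fixes Mi :: "(real \<times> 't) measure" and \<phi> :: "'t \<Rightarrow> real"
  assumes "prob_space Mi" "sets Mi = sets (borel \<Otimes>\<^sub>M (count_space UNIV :: 't measure))"
    "finite \<Gamma>" "AE y in Mi. snd y \<in> \<Gamma>"
  shows "integrable Mi (\<lambda>y. \<phi> (snd y) :: real)"
proof -
  interpret prob_space Mi by fact
  have i: "integrable Mi (\<lambda>y. \<Sum>t\<in>\<Gamma>. \<bar>\<phi> t\<bar>)" by simp
  have m: "(\<lambda>y. \<phi> (snd y) :: real) \<in> borel_measurable Mi" by (rule meas_snd[OF assms(2)])
  have "AE x in Mi. norm (\<phi> (snd x)) \<le> norm (\<Sum>t\<in>\<Gamma>. \<bar>\<phi> t\<bar>)"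
    using assms(4)
  proof eventually_elim
    case (elim x)
    have "\<bar>\<phi> (snd x)\<bar> \<le> (\<Sum>t\<in>\<Gamma>. \<bar>\<phi> t\<bar>)"
      using member_le_sum[of "snd x" \<Gamma> "\<lambda>t. \<bar>\<phi> t\<bar>"] elim assms(3) by auto
    then show ?case by simp
  qed
  then show ?thesis using Bochner_Integration.integrable_bound[OF i m] by blast
qed

lemma ind_int:
  assumes "sets Mi = sets (borel \<Otimes>\<^sub>M (count_space UNIV :: 't measure))"
    "integrable Mi (g :: real \<times> 't \<Rightarrow> real)"
  shows "integrable Mi (\<lambda>y. g y * indicator {y. snd y = t} y)"
  using integrable_mult_indicator[OF sets_snd[OF assms(1), of "\<lambda>s. s = t"] assms(2)]
  by (simp add: mult.commute)

lemma type_split: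
  assumes "sets Mi = sets (borel \<Otimes>\<^sub>M (count_space UNIV :: 't measure))"
    "finite \<Gamma>" "AE y in Mi. snd y \<in> \<Gamma>" "integrable Mi (g :: real \<times> 't \<Rightarrow> real)"
  shows "(\<integral>y. g y \<partial>Mi) = (\<Sum>t\<in>\<Gamma>. \<integral>y. g y * indicator {y. snd y = t} y \<partial>Mi)"
proof -
  have "(\<integral>y. g y \<partial>Mi) = (\<integral>y. (\<Sum>t\<in>\<Gamma>. g y * indicator {y. snd y = t} y) \<partial>Mi)"
    using assms(3)
  proof (intro integral_cong_AE, goal_cases)
    case 1 show ?case using assms(4) by auto
    case 2 show ?case
      apply (rule borel_measurable_integrable)
      using ind_int[OF assms(1,4)] by auto
    case 3 show ?case using assms(3)
    proof eventually_elim
      case (elim x)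
      have "(\<Sum>t\<in>\<Gamma>. g x * indicator {y. snd y = t} x) = (\<Sum>t\<in>\<Gamma>. if t = snd x then g x else 0)"
        by (intro sum.cong) (auto simp: indicator_def)
      also have "\<dots> = g x" using elim assms(2) by simp
      finally show ?case by simp
    qed
  qed
  also have "\<dots> = (\<Sum>t\<in>\<Gamma>. \<integral>y. g y * indicator {y. snd y = t} y \<partial>Mi)"
    using ind_int[OF assms(1,4)] by (subst Bochner_Integration.integral_sum) auto
  finally show ?thesis .
qed


lemma prod_swap:
  fixes M :: "nat \<Rightarrow> 'a measure" and f g :: "(nat \<Rightarrow> 'a) \<Rightarrow> real"
  assumes P: "\<forall>j\<in>I. prob_space (M j)" and fin: "finite I" and i: "i \<in> I"
    and f: "integrable (PiM I M) f" and g: "integrable (PiM I M) g"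
    and eq: "\<And>x. x \<in> space (PiM (I - {i}) M) \<Longrightarrow> (\<integral>y. f (x(i:=y)) \<partial>M i) = (\<integral>y. g (x(i:=y)) \<partial>M i)"
  shows "integral\<^sup>L (PiM I M) f = integral\<^sup>L (PiM I M) g"
proof -
  define M' where "M' j = (if j \<in> I then M j else return (count_space UNIV) undefined)" for j
  have PM': "prob_space (M' j)" for j
    using P by (auto simp: M'_def intro: prob_space_return)
  interpret product_sigma_finite M'
    unfolding product_sigma_finite_def using prob_space_imp_sigma_finite[OF PM'] by blast
  have e1: "PiM I M = PiM I M'" by (rule PiM_cong) (auto simp: M'_def)
  have e2: "PiM (I - {i}) M = PiM (I - {i}) M'" by (rule PiM_cong) (auto simp: M'_def)
  have Mi: "M' i = M i" using i by (simp add: M'_def)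
  have I: "insert i (I - {i}) = I" using i by auto
  have "integral\<^sup>L (PiM I M) f = (\<integral>x. (\<integral>y. f (x(i:=y)) \<partial>M' i) \<partial>PiM (I - {i}) M')"
    using product_integral_insert[of "I - {i}" i f] fin f i by (simp add: e1 insert_absorb)
  also have "\<dots> = (\<integral>x. (\<integral>y. g (x(i:=y)) \<partial>M' i) \<partial>PiM (I - {i}) M')"
    by (rule Bochner_Integration.integral_cong) (use eq in \<open>auto simp: Mi e2\<close>)
  also have "\<dots> = integral\<^sup>L (PiM I M) g"
    using product_integral_insert[of "I - {i}" i g] fin g i by (simp add: e1 insert_absorb)
  finally show ?thesis .
qed

lemma int_comp:
  fixes M :: "nat \<Rightarrow> 'a measure" and \<phi> :: "'a \<Rightarrow> real"
  assumes P: "\<forall>j\<in>I. prob_space (M j)" and i: "i \<in> I" and int: "integrable (M i) \<phi>"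
  shows "integrable (PiM I M) (\<lambda>\<omega>. \<phi> (\<omega> i))"
proof -
  have "distr (PiM I M) (M i) (\<lambda>\<omega>. \<omega> i) = M i"
    by (rule distr_PiM_component) (use P i in auto)
  moreover have "integrable (distr (PiM I M) (M i) (\<lambda>\<omega>. \<omega> i)) \<phi> \<longleftrightarrow> integrable (PiM I M) (\<lambda>\<omega>. \<phi> (\<omega> i))"
    by (rule integrable_distr_eq) (use i int in auto)
  ultimately show ?thesis using int by simp
qed

lemma int_bool:
  fixes f :: "'a \<Rightarrow> real"
  assumes "integrable M f" "(\<lambda>\<omega>. of_bool (R \<omega>) :: real) \<in> borel_measurable M"
  shows "integrable M (\<lambda>\<omega>. of_bool (R \<omega>) * f \<omega>)"
proof -
  have m: "(\<lambda>\<omega>. of_bool (R \<omega>) * f \<omega>) \<in> borel_measurable M"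
    using assms by measurable
  have "AE x in M. norm (of_bool (R x) * f x) \<le> norm (f x)" by auto
  then show ?thesis using Bochner_Integration.integrable_bound[OF assms(1) m] by blast
qed

lemma indep_F:
  fixes D :: "nat \<Rightarrow> 'a measure" and \<phi>1 \<phi>2 :: "'a \<Rightarrow> real"
  assumes P: "\<forall>j\<in>I. prob_space (D j)" and fin: "finite I" and i: "i \<in> I"
    and Rm: "(\<lambda>\<omega>. of_bool (R \<omega>) :: real) \<in> borel_measurable (PiM I D)"
    and Rc: "\<And>w y. R (w(i:=y)) = R (w(i:=c))"
    and i1: "integrable (D i) \<phi>1" and i2: "integrable (D i) \<phi>2"
    and eq: "(\<integral>y. \<phi>1 y \<partial>D i) = (\<integral>y. \<phi>2 y \<partial>D i)"
  shows "(\<integral>\<omega>. of_bool (R \<omega>) * \<phi>1 (\<omega> i) \<partial>PiM I D) = (\<integral>\<omega>. of_bool (R \<omega>) * \<phi>2 (\<omega> i) \<partial>PiM I D)"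
proof (rule prod_swap[OF P fin i])
  show "integrable (PiM I D) (\<lambda>\<omega>. of_bool (R \<omega>) * \<phi>1 (\<omega> i))"
    by (rule int_bool[OF int_comp[OF P i i1] Rm])
  show "integrable (PiM I D) (\<lambda>\<omega>. of_bool (R \<omega>) * \<phi>2 (\<omega> i))"
    by (rule int_bool[OF int_comp[OF P i i2] Rm])
  fix x
  have a: "(\<integral>y. of_bool (R (x(i:=y))) * \<phi>1 ((x(i:=y)) i) \<partial>D i) = (\<integral>y. of_bool (R (x(i:=c))) * \<phi>1 y \<partial>D i)"
    apply (rule Bochner_Integration.integral_cong, rule refl)
    subgoal for y using Rc[of x y] by simp
    done
  have b: "(\<integral>y. of_bool (R (x(i:=y))) * \<phi>2 ((x(i:=y)) i) \<partial>D i) = (\<integral>y. of_bool (R (x(i:=c))) * \<phi>2 y \<partial>D i)"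
    apply (rule Bochner_Integration.integral_cong, rule refl)
    subgoal for y using Rc[of x y] by simp
    done
  show "(\<integral>y. of_bool (R (x(i:=y))) * \<phi>1 ((x(i:=y)) i) \<partial>D i) = (\<integral>y. of_bool (R (x(i:=y))) * \<phi>2 ((x(i:=y)) i) \<partial>D i)"
    unfolding a b using eq by simp
qed

lemma indep_T:
  fixes D :: "nat \<Rightarrow> (real \<times> 't) measure" and \<phi>1 \<phi>2 :: "real \<times> 't \<Rightarrow> real"
  assumes P: "\<forall>j\<in>I. prob_space (D j)" and fin: "finite I" and i: "i \<in> I"
    and S: "sets (D i) = sets (borel \<Otimes>\<^sub>M (count_space UNIV :: 't measure))"
    and G: "finite \<Gamma>" "AE y in D i. snd y \<in> \<Gamma>"
    and Rm: "(\<lambda>\<omega>. of_bool (R \<omega>) :: real) \<in> borel_measurable (PiM I D)"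
    and Rc: "\<And>w y. R (w(i:=y)) = R (w(i:=(c, snd y)))"
    and i1: "integrable (D i) \<phi>1" and i2: "integrable (D i) \<phi>2"
    and eq: "\<forall>t\<in>\<Gamma>. (\<integral>y. \<phi>1 y * indicator {y. snd y = t} y \<partial>D i) = (\<integral>y. \<phi>2 y * indicator {y. snd y = t} y \<partial>D i)"
  shows "(\<integral>\<omega>. of_bool (R \<omega>) * \<phi>1 (\<omega> i) \<partial>PiM I D) = (\<integral>\<omega>. of_bool (R \<omega>) * \<phi>2 (\<omega> i) \<partial>PiM I D)"
proof (rule prod_swap[OF P fin i])
  show "integrable (PiM I D) (\<lambda>\<omega>. of_bool (R \<omega>) * \<phi>1 (\<omega> i))"
    by (rule int_bool[OF int_comp[OF P i i1] Rm])
  show "integrable (PiM I D) (\<lambda>\<omega>. of_bool (R \<omega>) * \<phi>2 (\<omega> i))"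
    by (rule int_bool[OF int_comp[OF P i i2] Rm])
  fix x
  define k where "k t = R (x(i:=(c, t)))" for t
  have inner: "(\<integral>y. of_bool (R (x(i:=y))) * \<phi> ((x(i:=y)) i) \<partial>D i)
      = (\<Sum>t\<in>\<Gamma>. of_bool (k t) * (\<integral>y. \<phi> y * indicator {y. snd y = t} y \<partial>D i))"
    if ip: "integrable (D i) \<phi>" for \<phi> :: "real \<times> 't \<Rightarrow> real"
  proof -
    have "(\<integral>y. of_bool (R (x(i:=y))) * \<phi> ((x(i:=y)) i) \<partial>D i) = (\<integral>y. of_bool (k (snd y)) * \<phi> y \<partial>D i)"
      apply (rule Bochner_Integration.integral_cong, rule refl)
      subgoal for y using Rc[of x y] by (simp add: k_def)
      done
    also have "\<dots> = (\<Sum>t\<in>\<Gamma>. \<integral>y. of_bool (k (snd y)) * \<phi> y * indicator {y. snd y = t} y \<partial>D i)"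
      by (rule type_split[OF S G int_bool[OF ip meas_snd[OF S, of "\<lambda>t. of_bool (k t)"]]])
    also have "\<dots> = (\<Sum>t\<in>\<Gamma>. \<integral>y. of_bool (k t) * (\<phi> y * indicator {y. snd y = t} y) \<partial>D i)"
      by (intro sum.cong refl Bochner_Integration.integral_cong) (auto simp: indicator_def)
    also have "\<dots> = (\<Sum>t\<in>\<Gamma>. of_bool (k t) * (\<integral>y. \<phi> y * indicator {y. snd y = t} y \<partial>D i))"
      by simp
    finally show ?thesis .
  qed
  show "(\<integral>y. of_bool (R (x(i:=y))) * \<phi>1 ((x(i:=y)) i) \<partial>D i) = (\<integral>y. of_bool (R (x(i:=y))) * \<phi>2 ((x(i:=y)) i) \<partial>D i)"
    unfolding inner[OF i1] inner[OF i2] using eq by (intro sum.cong) auto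
qed


definition AA :: "(real \<times> 't) measure \<Rightarrow> real \<Rightarrow> 't \<Rightarrow> real" where
  "AA Mi s t = (\<integral>x. max 0 (fst x - s) * indicator {x. snd x = t} x \<partial>Mi)"

lemma int_pos:
  fixes Mi :: "(real \<times> 't) measure"
  assumes "prob_space Mi" "integrable Mi fst" "integrable Mi (\<lambda>y. \<psi> y :: real)"
  shows "integrable Mi (\<lambda>y. max 0 (fst y - \<psi> y))"
proof -
  interpret prob_space Mi by fact
  show ?thesis using assms(2,3) by (intro integrable_max integrable_diff) auto
qed

lemma int_min:
  fixes Mi :: "(real \<times> 't) measure"
  assumes "prob_space Mi" "integrable Mi fst" "integrable Mi (\<lambda>y. \<psi> y :: real)"
  shows "integrable Mi (\<lambda>y. min (fst y) (\<psi> y))"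
  using assms(2,3) by (intro integrable_min) auto

lemma null_int:
  fixes Mi :: "(real \<times> 't) measure"
  assumes "prob_space Mi" "sets Mi = sets (borel \<Otimes>\<^sub>M (count_space UNIV :: 't measure))"
    "measure Mi {x. snd x = t} = 0"
  shows "(\<integral>x. g x * indicator {x. snd x = t} x \<partial>Mi) = (0::real)"
proof -
  interpret prob_space Mi by fact
  have s: "{x. snd x = t} \<in> sets Mi" using sets_snd[OF assms(2), of "\<lambda>s. s = t"] by simp
  then have "{x. snd x = t} \<in> null_sets Mi" using assms(3) by (simp add: null_sets_def emeasure_eq_measure)
  then have "AE x in Mi. x \<notin> {x. snd x = t}" by (rule AE_not_in)
  then have "AE x in Mi. g x * indicator {x. snd x = t} x = 0" by eventually_elim auto
  then show ?thesis by (rule integral_eq_zero_AE)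
qed

lemma int_const_ind:
  fixes Mi :: "(real \<times> 't) measure"
  assumes "prob_space Mi" "sets Mi = sets (borel \<Otimes>\<^sub>M (count_space UNIV :: 't measure))"
  shows "(\<integral>x. c * indicator {x. snd x = t} x \<partial>Mi) = c * measure Mi {x. snd x = t}"
proof -
  have "space Mi = UNIV" using sets_eq_imp_space_eq[OF assms(2)] by (simp add: space_pair_measure)
  then show ?thesis by simp
qed

lemma AA_condE:
  "measure Mi {x. snd x = t} > 0 \<Longrightarrow> AA Mi s t = measure Mi {x. snd x = t} * condE Mi s t"
  by (simp add: AA_def condE_def)

lemma AA_mono:
  fixes Mi :: "(real \<times> 't) measure"
  assumes "prob_space Mi" "sets Mi = sets (borel \<Otimes>\<^sub>M (count_space UNIV :: 't measure))"
    "integrable Mi fst" "s1 \<le> s2"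
  shows "AA Mi s2 t \<le> AA Mi s1 t"
proof -
  interpret prob_space Mi by fact
  have ii: "integrable Mi (\<lambda>x. max 0 (fst x - s) * indicator {x. snd x = t} x)" for s
    by (rule ind_int[OF assms(2) int_pos[OF assms(1,3)]]) simp
  show ?thesis
  unfolding AA_def
proof (rule integral_mono[OF ii ii])
  show "max 0 (fst x - s2) * indicator {x. snd x = t} x \<le> max 0 (fst x - s1) * indicator {x. snd x = t} x" for x
    using assms(4) by (auto simp: indicator_def)
qed
qed

lemma condE_mono:
  fixes Mi :: "(real \<times> 't) measure"
  assumes "prob_space Mi" "sets Mi = sets (borel \<Otimes>\<^sub>M (count_space UNIV :: 't measure))"
    "integrable Mi fst" "s1 \<le> s2" "measure Mi {x. snd x = t} > 0"
  shows "condE Mi s2 t \<le> condE Mi s1 t"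
proof -
  have "AA Mi s2 t \<le> AA Mi s1 t" by (rule AA_mono[OF assms(1-4)])
  then show ?thesis using assms(5) by (simp add: AA_condE mult_le_cancel_left_pos)
qed

lemma condE_key:
  fixes Mi :: "(real \<times> 't) measure"
  assumes "prob_space Mi" "sets Mi = sets (borel \<Otimes>\<^sub>M (count_space UNIV :: 't measure))"
    "integrable Mi fst" "measure Mi {x. snd x = t} > 0" "condE Mi sf t = c"
  shows "c + max 0 (- c + condE Mi sp t) = condE Mi (min sp sf) t"
proof (cases "sf \<le> sp")
  case True
  then have "condE Mi sp t \<le> condE Mi sf t" by (rule condE_mono[OF assms(1-3) _ assms(4)])
  then show ?thesis using True assms(5) by (simp add: min_def)
next
  case False
  then have "condE Mi sf t \<le> condE Mi sp t" by (intro condE_mono[OF assms(1-3) _ assms(4)]) simp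
  then show ?thesis using False assms(5) by (simp add: min_def)
qed

lemma condE_strict:
  fixes Mi :: "(real \<times> 't) measure"
  assumes P: "prob_space Mi" and S: "sets Mi = sets (borel \<Otimes>\<^sub>M (count_space UNIV :: 't measure))"
    and I: "integrable Mi fst" and p: "measure Mi {x. snd x = t} > 0" and e: "condE Mi sf t = c" and c: "c > 0"
  shows "c < condE Mi sp t \<longleftrightarrow> sp < sf"
proof
  assume "c < condE Mi sp t"
  then show "sp < sf" using condE_mono[OF P S I _ p, of sf sp] e by (cases "sf \<le> sp") auto
next
  assume lt: "sp < sf"
  interpret prob_space Mi by fact
  have ge: "condE Mi sf t \<le> condE Mi sp t" using condE_mono[OF P S I _ p, of sp sf] lt by simp
  show "c < condE Mi sp t"
  proof (rule ccontr)
    assume "\<not> c < condE Mi sp t"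
    then have eq: "condE Mi sp t = condE Mi sf t" using ge e by simp
    define d where "d x = (max 0 (fst x - sp) - max 0 (fst x - sf)) * indicator {x. snd x = t} x" for x
    have ii: "integrable Mi (\<lambda>x. max 0 (fst x - s) * indicator {x. snd x = t} x)" for s
      by (rule ind_int[OF S int_pos[OF P I]]) simp
    have "(\<integral>x. d x \<partial>Mi) = AA Mi sp t - AA Mi sf t"
      unfolding d_def AA_def using ii[of sp] ii[of sf]
      by (subst Bochner_Integration.integral_diff[symmetric]) (auto simp: left_diff_distrib)
    also have "\<dots> = 0" using eq p by (simp add: AA_condE)
    finally have "(\<integral>x. d x \<partial>Mi) = 0" .
    moreover have "integrable Mi d" unfolding d_def using ii[of sp] ii[of sf]
      by (simp add: left_diff_distrib)
    moreover have "AE x in Mi. 0 \<le> d x" using lt by (auto simp: d_def indicator_def)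
    ultimately have "AE x in Mi. d x = 0" using integral_nonneg_eq_0_iff_AE by blast
    then have "AE x in Mi. max 0 (fst x - sf) * indicator {x. snd x = t} x = 0"
    proof eventually_elim
      case (elim x) then show ?case using lt by (auto simp: d_def indicator_def split: if_splits)
    qed
    then have "AA Mi sf t = 0" unfolding AA_def by (rule integral_eq_zero_AE)
    then have "condE Mi sf t = 0" using p by (simp add: AA_condE)
    then show False using e c by simp
  qed
qed


theorem mainTheorem4:
  fixes N :: nat
    and D :: "nat \<Rightarrow> (real \<times> 't) measure"
    and \<Gamma> :: "nat \<Rightarrow> 't set"
    and cF cP \<sigma>F \<sigma>P :: "nat \<Rightarrow> real"
    and \<sigma>Ft :: "nat \<Rightarrow> 't \<Rightarrow> real"
    and \<pi> :: "'t hist \<Rightarrow> action"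
  assumes prob: "\<forall>i<N. prob_space (D i)"
    and sets: "\<forall>i<N. sets (D i) = sets (borel \<Otimes>\<^sub>M count_space UNIV)"
    and Gamma_fin: "\<forall>i<N. finite (\<Gamma> i)"
    and Gamma_ae: "\<forall>i<N. AE x in D i. snd x \<in> \<Gamma> i"
    and V_nonneg: "\<forall>i<N. AE x in D i. 0 \<le> fst x"
    and V_int: "\<forall>i<N. integrable (D i) fst"
    and costs: "\<forall>i<N. 0 < cF i \<and> 0 < cP i"
    and sigmaF: "\<forall>i<N. (\<integral>x. max 0 (fst x - \<sigma>F i) \<partial>D i) = cF i"
    and sigmaFt: "\<forall>i<N. \<forall>t\<in>\<Gamma> i. measure (D i) {x. snd x = t} > 0 \<longrightarrow> condE (D i) (\<sigma>Ft i t) t = cF i"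
    and sigmaP: "\<forall>i<N. (\<integral>x. max 0 (- cF i + condE (D i) (\<sigma>P i) (snd x)) \<partial>D i) = cP i"
    and meas: "policy_measurable N D \<pi>"
  shows "JK N D \<sigma>F \<sigma>P \<sigma>Ft \<pi> = J N D cF cP \<pi> \<longleftrightarrow>
           cond1 N D \<sigma>F \<pi> \<and> cond2 N D \<sigma>P \<sigma>Ft \<pi> \<and> cond3 N D \<sigma>P \<sigma>Ft \<pi>"
proof -
  have PD: "\<forall>j\<in>{..<N}. prob_space (D j)" using prob by auto
  interpret PM: prob_space "boxes N D" by (rule prob_space_PiM) (use prob in auto)
  have fin: "finite {..<N}" by simp
  have measQ: "(\<lambda>\<omega>. of_bool (Q (acts N \<pi> \<omega>)) :: real) \<in> borel_measurable (boxes N D)" for Q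
    using meas unfolding policy_measurable_def by (rule measurable_compose) simp
  have mP: "(\<lambda>\<omega>. of_bool (PInd N \<pi> \<omega> i) :: real) \<in> borel_measurable (boxes N D)" for i
    using measQ[of "\<lambda>l. POpen i \<in> set l"] by (simp add: PInd_def)
  have mF: "(\<lambda>\<omega>. of_bool (FInd N \<pi> \<omega> i) :: real) \<in> borel_measurable (boxes N D)" for i
    using measQ[of "\<lambda>l. FOpen i \<in> set l \<and> POpen i \<notin> set l"] by (simp add: PInd_def FInd_def)
  have mFt: "(\<lambda>\<omega>. of_bool (FtInd N \<pi> \<omega> i) :: real) \<in> borel_measurable (boxes N D)" for i
    using measQ[of "\<lambda>l. FOpen i \<in> set l \<and> POpen i \<in> set l"] by (simp add: PInd_def FtInd_def)
  have mS: "(\<lambda>\<omega>. of_bool (SInd N \<pi> \<omega> i) :: real) \<in> borel_measurable (boxes N D)" for i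
    using measQ[of "\<lambda>l. Sel i \<in> set l \<and> POpen i \<notin> set l"] by (simp add: PInd_def SInd_def)
  have mSt: "(\<lambda>\<omega>. of_bool (StInd N \<pi> \<omega> i) :: real) \<in> borel_measurable (boxes N D)" for i
    using measQ[of "\<lambda>l. Sel i \<in> set l \<and> POpen i \<in> set l"] by (simp add: PInd_def StInd_def)
  have intB: "integrable (boxes N D) (\<lambda>\<omega>. of_bool (R \<omega>) * \<psi> (\<omega> i))"
    if "i < N" "(\<lambda>\<omega>. of_bool (R \<omega>) :: real) \<in> borel_measurable (boxes N D)" "integrable (D i) \<psi>"
    for i R and \<psi> :: "real \<times> 't \<Rightarrow> real"
    by (rule int_bool[OF int_comp[OF PD] that(2)]) (use that in auto)

  define q where "q i t = max 0 (- cF i + condE (D i) (\<sigma>P i) t)" for i t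
  define m where "m i t = min (\<sigma>P i) (\<sigma>Ft i t)" for i t
  define a where "a i y = max 0 (fst y - \<sigma>F i)" for i and y :: "real \<times> 't"
  define b where "b i y = max 0 (fst y - m i (snd y))" for i and y :: "real \<times> 't"
  define qq where "qq i y = q i (snd y)" for i and y :: "real \<times> 't"
  define mn1 where "mn1 i y = min (fst y) (\<sigma>F i)" for i and y :: "real \<times> 't"
  define mn2 where "mn2 i y = min (fst y) (m i (snd y))" for i and y :: "real \<times> 't"

  have intD: "integrable (D i) (a i)" "integrable (D i) (b i)" "integrable (D i) (qq i)"
     "integrable (D i) (mn1 i)" "integrable (D i) (mn2 i)" "integrable (D i) (\<lambda>_. c)"
     "integrable (D i) (\<lambda>y. cF i + qq i y)"
    if i: "i < N" for i and c :: real
  proof -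
    have Pi: "prob_space (D i)" and Si: "sets (D i) = sets (borel \<Otimes>\<^sub>M (count_space UNIV :: 't measure))"
      and Gf: "finite (\<Gamma> i)" and Ga: "AE x in D i. snd x \<in> \<Gamma> i" and Vi: "integrable (D i) fst"
      using i prob sets Gamma_fin Gamma_ae V_int by auto
    note fs = integrable_fun_snd[OF Pi Si Gf Ga]
    show "integrable (D i) (a i)" unfolding a_def using int_pos[OF Pi Vi fs[of "\<lambda>_. \<sigma>F i"]] by simp
    show "integrable (D i) (b i)" unfolding b_def using int_pos[OF Pi Vi fs[of "\<lambda>t. m i t"]] by simp
    show "integrable (D i) (qq i)" unfolding qq_def using fs[of "\<lambda>t. q i t"] by simp
    show "integrable (D i) (mn1 i)" unfolding mn1_def using int_min[OF Pi Vi fs[of "\<lambda>_. \<sigma>F i"]] by simp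
    show "integrable (D i) (mn2 i)" unfolding mn2_def using int_min[OF Pi Vi fs[of "\<lambda>t. m i t"]] by simp
    show "integrable (D i) (\<lambda>_. c)" using fs[of "\<lambda>_. c"] by simp
    show "integrable (D i) (\<lambda>y. cF i + qq i y)" unfolding qq_def using fs[of "\<lambda>t. cF i + q i t"] by simp
  qed

  define c0 :: "real \<times> 't" where "c0 = (0, undefined)"
  have RcF: "FInd N \<pi> (w(i:=y)) i = FInd N \<pi> (w(i:=c0)) i" for w y i
    using PF_indep[of i "w(i:=y)" "w(i:=c0)" N \<pi>] by auto
  have RcP: "PInd N \<pi> (w(i:=y)) i = PInd N \<pi> (w(i:=c0)) i" for w y i
    using PF_indep[of i "w(i:=y)" "w(i:=c0)" N \<pi>] by auto
  have RcFt: "FtInd N \<pi> (w(i:=y)) i = FtInd N \<pi> (w(i:=(0, snd y))) i" for w y i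
    using Ft_indep[of i "w(i:=y)" "w(i:=(0, snd y))" N \<pi>] by auto

  have E1: "(\<integral>\<omega>. of_bool (FInd N \<pi> \<omega> i) * a i (\<omega> i) \<partial>boxes N D)
      = (\<integral>\<omega>. of_bool (FInd N \<pi> \<omega> i) * cF i \<partial>boxes N D)" if i: "i < N" for i
  proof -
    interpret Pi: prob_space "D i" using prob i by auto
    have "(\<integral>y. a i y \<partial>D i) = (\<integral>y. cF i \<partial>D i)" using sigmaF i by (simp add: a_def Pi.prob_space)
    then show ?thesis
      using indep_F[OF PD fin _ mF RcF intD(1)[OF i] intD(6)[OF i, of "cF i"]] i by simp
  qed
  have E2: "(\<integral>\<omega>. of_bool (PInd N \<pi> \<omega> i) * qq i (\<omega> i) \<partial>boxes N D)
      = (\<integral>\<omega>. of_bool (PInd N \<pi> \<omega> i) * cP i \<partial>boxes N D)" if i: "i < N" for i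
  proof -
    interpret Pi: prob_space "D i" using prob i by auto
    have "(\<integral>y. qq i y \<partial>D i) = (\<integral>y. cP i \<partial>D i)" using sigmaP i by (simp add: qq_def q_def Pi.prob_space)
    then show ?thesis
      using indep_F[OF PD fin _ mP RcP intD(3)[OF i] intD(6)[OF i, of "cP i"]] i by simp
  qed
  have E3: "(\<integral>\<omega>. of_bool (FtInd N \<pi> \<omega> i) * b i (\<omega> i) \<partial>boxes N D)
      = (\<integral>\<omega>. of_bool (FtInd N \<pi> \<omega> i) * (cF i + qq i (\<omega> i)) \<partial>boxes N D)" if i: "i < N" for i
  proof -
    have Pi: "prob_space (D i)" and Si: "sets (D i) = sets (borel \<Otimes>\<^sub>M (count_space UNIV :: 't measure))"
      and Gf: "finite (\<Gamma> i)" and Ga: "AE x in D i. snd x \<in> \<Gamma> i" and Vi: "integrable (D i) fst"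
      using i prob sets Gamma_fin Gamma_ae V_int by auto
    have "(\<integral>y. b i y * indicator {y. snd y = t} y \<partial>D i) = (\<integral>y. (cF i + qq i y) * indicator {y. snd y = t} y \<partial>D i)"
      if t: "t \<in> \<Gamma> i" for t
    proof -
      have "(\<integral>y. b i y * indicator {y. snd y = t} y \<partial>D i) = AA (D i) (m i t) t"
        unfolding AA_def b_def by (rule Bochner_Integration.integral_cong) (auto simp: indicator_def)
      moreover have "(\<integral>y. (cF i + qq i y) * indicator {y. snd y = t} y \<partial>D i)
          = (\<integral>y. (cF i + q i t) * indicator {y. snd y = t} y \<partial>D i)"
        unfolding qq_def by (rule Bochner_Integration.integral_cong) (auto simp: indicator_def)
      moreover have "\<dots> = (cF i + q i t) * measure (D i) {y. snd y = t}"
        by (rule int_const_ind[OF Pi Si])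
      moreover have "AA (D i) (m i t) t = (cF i + q i t) * measure (D i) {y. snd y = t}"
      proof (cases "measure (D i) {y. snd y = t} > 0")
        case True
        have "condE (D i) (\<sigma>Ft i t) t = cF i" using sigmaFt i t True by auto
        from condE_key[OF Pi Si Vi True this, of "\<sigma>P i"]
        show ?thesis using True by (simp add: AA_condE q_def m_def)
      next
        case False
        then have "measure (D i) {y. snd y = t} = 0" using measure_nonneg[of "D i"] by (simp add: not_less eq_iff)
        then show ?thesis unfolding AA_def using null_int[OF Pi Si] by simp
      qed
      ultimately show ?thesis by (simp only:)
    qed
    then show ?thesis
      using indep_T[OF PD fin _ Si Gf Ga mFt RcFt intD(2)[OF i] intD(7)[OF i]] i by simp
  qed

  define JKp where "JKp i \<omega> = of_bool (SInd N \<pi> \<omega> i) * mn1 i (\<omega> i) + of_bool (StInd N \<pi> \<omega> i) * mn2 i (\<omega> i)"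
    for i \<omega>
  define R where "R i \<omega> = (of_bool (FInd N \<pi> \<omega> i) * a i (\<omega> i) - of_bool (FInd N \<pi> \<omega> i) * cF i)
     + (of_bool (FtInd N \<pi> \<omega> i) * b i (\<omega> i) - of_bool (FtInd N \<pi> \<omega> i) * (cF i + qq i (\<omega> i)))
     + (of_bool (PInd N \<pi> \<omega> i) * qq i (\<omega> i) - of_bool (PInd N \<pi> \<omega> i) * cP i)" for i \<omega>
  define X where "X i \<omega> = of_bool (FInd N \<pi> \<omega> i) * a i (\<omega> i) - of_bool (SInd N \<pi> \<omega> i) * a i (\<omega> i)
     + of_bool (FtInd N \<pi> \<omega> i) * b i (\<omega> i) - of_bool (StInd N \<pi> \<omega> i) * b i (\<omega> i)
     + of_bool (PInd N \<pi> \<omega> i) * qq i (\<omega> i) - of_bool (FtInd N \<pi> \<omega> i) * qq i (\<omega> i)" for i \<omega>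

  have intJKp: "integrable (boxes N D) (JKp i)" if i: "i < N" for i
    unfolding JKp_def[abs_def]
    by (rule Bochner_Integration.integrable_add[OF intB[OF i mS intD(4)[OF i]] intB[OF i mSt intD(5)[OF i]]])
  have iF1: "integrable (boxes N D) (\<lambda>\<omega>. of_bool (FInd N \<pi> \<omega> i) * a i (\<omega> i))"
   and iF2: "integrable (boxes N D) (\<lambda>\<omega>. of_bool (FInd N \<pi> \<omega> i) * cF i)"
   and iT1: "integrable (boxes N D) (\<lambda>\<omega>. of_bool (FtInd N \<pi> \<omega> i) * b i (\<omega> i))"
   and iT2: "integrable (boxes N D) (\<lambda>\<omega>. of_bool (FtInd N \<pi> \<omega> i) * (cF i + qq i (\<omega> i)))"
   and iP1: "integrable (boxes N D) (\<lambda>\<omega>. of_bool (PInd N \<pi> \<omega> i) * qq i (\<omega> i))"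
   and iP2: "integrable (boxes N D) (\<lambda>\<omega>. of_bool (PInd N \<pi> \<omega> i) * cP i)"
   and iS1: "integrable (boxes N D) (\<lambda>\<omega>. of_bool (SInd N \<pi> \<omega> i) * a i (\<omega> i))"
   and iSt1: "integrable (boxes N D) (\<lambda>\<omega>. of_bool (StInd N \<pi> \<omega> i) * b i (\<omega> i))"
   and iFt3: "integrable (boxes N D) (\<lambda>\<omega>. of_bool (FtInd N \<pi> \<omega> i) * qq i (\<omega> i))"
   if i: "i < N" for i
    using intB[OF i mF intD(1)[OF i]] intB[OF i mF intD(6)[OF i, of "cF i"]]
      intB[OF i mFt intD(2)[OF i]] intB[OF i mFt intD(7)[OF i]]
      intB[OF i mP intD(3)[OF i]] intB[OF i mP intD(6)[OF i, of "cP i"]]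
      intB[OF i mS intD(1)[OF i]] intB[OF i mSt intD(2)[OF i]] intB[OF i mFt intD(3)[OF i]]
    by simp_all
  have intR: "integrable (boxes N D) (R i)" if i: "i < N" for i
    unfolding R_def[abs_def]
    using iF1[OF i] iF2[OF i] iT1[OF i] iT2[OF i] iP1[OF i] iP2[OF i] by auto
  have intX: "integrable (boxes N D) (X i)" if i: "i < N" for i
    unfolding X_def[abs_def]
    using iF1[OF i] iS1[OF i] iT1[OF i] iSt1[OF i] iP1[OF i] iFt3[OF i] by auto
  have R0: "(\<integral>\<omega>. R i \<omega> \<partial>boxes N D) = 0" if i: "i < N" for i
  proof -
    have "(\<integral>\<omega>. R i \<omega> \<partial>boxes N D) =
       ((\<integral>\<omega>. of_bool (FInd N \<pi> \<omega> i) * a i (\<omega> i) \<partial>boxes N D) - (\<integral>\<omega>. of_bool (FInd N \<pi> \<omega> i) * cF i \<partial>boxes N D))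
     + ((\<integral>\<omega>. of_bool (FtInd N \<pi> \<omega> i) * b i (\<omega> i) \<partial>boxes N D) - (\<integral>\<omega>. of_bool (FtInd N \<pi> \<omega> i) * (cF i + qq i (\<omega> i)) \<partial>boxes N D))
     + ((\<integral>\<omega>. of_bool (PInd N \<pi> \<omega> i) * qq i (\<omega> i) \<partial>boxes N D) - (\<integral>\<omega>. of_bool (PInd N \<pi> \<omega> i) * cP i \<partial>boxes N D))"
      unfolding R_def
      using iF1[OF i] iF2[OF i] iT1[OF i] iT2[OF i] iP1[OF i] iP2[OF i]
      by (simp add: Bochner_Integration.integral_add Bochner_Integration.integral_diff)
    also have "\<dots> = 0" using E1[OF i] E2[OF i] E3[OF i] by simp
    finally show ?thesis .
  qed

  have SF: "SInd N \<pi> \<omega> i \<Longrightarrow> FInd N \<pi> \<omega> i" for \<omega> i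
    using acts_Sel by (auto simp: SInd_def FInd_def)
  have StFt: "StInd N \<pi> \<omega> i \<Longrightarrow> FtInd N \<pi> \<omega> i" for \<omega> i
    using acts_Sel by (auto simp: StInd_def FtInd_def)
  have FtP: "FtInd N \<pi> \<omega> i \<Longrightarrow> PInd N \<pi> \<omega> i" for \<omega> i
    by (auto simp: FtInd_def)
  have mm: "min x c + max 0 (x - c) = x" for x c :: real by auto

  have Jpt: "(of_bool (SInd N \<pi> \<omega> i) * fst (\<omega> i) - of_bool (FInd N \<pi> \<omega> i) * cF i
         - of_bool (PInd N \<pi> \<omega> i) * cP i)
      + (of_bool (StInd N \<pi> \<omega> i) * fst (\<omega> i) - of_bool (FtInd N \<pi> \<omega> i) * cF i)
      = JKp i \<omega> + R i \<omega> - X i \<omega>" for i \<omega>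
  proof -
    have h1: "fst (\<omega> i) = mn1 i (\<omega> i) + a i (\<omega> i)" using mm by (simp add: mn1_def a_def)
    have h2: "fst (\<omega> i) = mn2 i (\<omega> i) + b i (\<omega> i)" using mm by (simp add: mn2_def b_def)
    have "of_bool (SInd N \<pi> \<omega> i) * fst (\<omega> i) = of_bool (SInd N \<pi> \<omega> i) * (mn1 i (\<omega> i) + a i (\<omega> i))"
      using h1 by simp
    moreover have "of_bool (StInd N \<pi> \<omega> i) * fst (\<omega> i) = of_bool (StInd N \<pi> \<omega> i) * (mn2 i (\<omega> i) + b i (\<omega> i))"
      using h2 by simp
    ultimately show ?thesis unfolding JKp_def R_def X_def by (simp add: algebra_simps)
  qed
  have JKpt: "of_bool (SInd N \<pi> \<omega> i) * min (fst (\<omega> i)) (\<sigma>F i) * (1 - of_bool (PInd N \<pi> \<omega> i))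
      + of_bool (StInd N \<pi> \<omega> i) * min (fst (\<omega> i)) (min (\<sigma>P i) (\<sigma>Ft i (snd (\<omega> i))))
          * of_bool (PInd N \<pi> \<omega> i) = JKp i \<omega>" for i \<omega>
    unfolding JKp_def mn1_def mn2_def m_def by (auto simp: SInd_def StInd_def)

  have JK_eq: "JK N D \<sigma>F \<sigma>P \<sigma>Ft \<pi> = (\<integral>\<omega>. (\<Sum>i<N. JKp i \<omega>) \<partial>boxes N D)"
    unfolding JK_def using JKpt by simp
  have "J N D cF cP \<pi> = (\<integral>\<omega>. (\<Sum>i<N. JKp i \<omega>) + (\<Sum>i<N. R i \<omega>) - (\<Sum>i<N. X i \<omega>) \<partial>boxes N D)"
    unfolding J_def Jpt by (simp add: sum.distrib sum_subtractf)
  also have "\<dots> = (\<integral>\<omega>. (\<Sum>i<N. JKp i \<omega>) \<partial>boxes N D) + (\<integral>\<omega>. (\<Sum>i<N. R i \<omega>) \<partial>boxes N D)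
       - (\<integral>\<omega>. (\<Sum>i<N. X i \<omega>) \<partial>boxes N D)"
  proof -
    have sJ: "integrable (boxes N D) (\<lambda>\<omega>. \<Sum>i<N. JKp i \<omega>)"
      by (rule Bochner_Integration.integrable_sum) (use intJKp in auto)
    have sR: "integrable (boxes N D) (\<lambda>\<omega>. \<Sum>i<N. R i \<omega>)"
      by (rule Bochner_Integration.integrable_sum) (use intR in auto)
    have sX: "integrable (boxes N D) (\<lambda>\<omega>. \<Sum>i<N. X i \<omega>)"
      by (rule Bochner_Integration.integrable_sum) (use intX in auto)
    show ?thesis
      using Bochner_Integration.integral_diff[OF Bochner_Integration.integrable_add[OF sJ sR] sX]
        Bochner_Integration.integral_add[OF sJ sR] by simp
  qed
  also have "(\<integral>\<omega>. (\<Sum>i<N. R i \<omega>) \<partial>boxes N D) = 0"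
    using intR R0 by (simp add: Bochner_Integration.integral_sum)
  finally have J_eq: "J N D cF cP \<pi> = JK N D \<sigma>F \<sigma>P \<sigma>Ft \<pi> - (\<integral>\<omega>. (\<Sum>i<N. X i \<omega>) \<partial>boxes N D)"
    using JK_eq by simp

  define C1 where "C1 i \<omega> = (FInd N \<pi> \<omega> i \<and> fst (\<omega> i) > \<sigma>F i \<longrightarrow> Sel i \<in> set (acts N \<pi> \<omega>))" for i \<omega>
  define C2 where "C2 i \<omega> = (PInd N \<pi> \<omega> i \<and> \<sigma>Ft i (snd (\<omega> i)) > \<sigma>P i \<longrightarrow> FOpen i \<in> set (acts N \<pi> \<omega>))" for i \<omega>
  define C2' where "C2' i \<omega> = (PInd N \<pi> \<omega> i \<and> cF i < condE (D i) (\<sigma>P i) (snd (\<omega> i)) \<longrightarrow> FOpen i \<in> set (acts N \<pi> \<omega>))" for i \<omega>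
  define C3 where "C3 i \<omega> = (FtInd N \<pi> \<omega> i \<and> fst (\<omega> i) > min (\<sigma>P i) (\<sigma>Ft i (snd (\<omega> i))) \<longrightarrow> Sel i \<in> set (acts N \<pi> \<omega>))" for i \<omega>

  have Xsplit: "X i \<omega> = (of_bool (FInd N \<pi> \<omega> i) - of_bool (SInd N \<pi> \<omega> i)) * a i (\<omega> i)
      + (of_bool (FtInd N \<pi> \<omega> i) - of_bool (StInd N \<pi> \<omega> i)) * b i (\<omega> i)
      + (of_bool (PInd N \<pi> \<omega> i) - of_bool (FtInd N \<pi> \<omega> i)) * qq i (\<omega> i)" for i \<omega>
    by (simp add: X_def algebra_simps)
  have t1: "0 \<le> (of_bool (FInd N \<pi> \<omega> i) - of_bool (SInd N \<pi> \<omega> i)) * a i (\<omega> i)" for i \<omega>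
    using SF[of \<omega> i] by (auto simp: a_def)
  have t2: "0 \<le> (of_bool (FtInd N \<pi> \<omega> i) - of_bool (StInd N \<pi> \<omega> i)) * b i (\<omega> i)" for i \<omega>
    using StFt[of \<omega> i] by (auto simp: b_def)
  have t3: "0 \<le> (of_bool (PInd N \<pi> \<omega> i) - of_bool (FtInd N \<pi> \<omega> i)) * qq i (\<omega> i)" for i \<omega>
    using FtP[of \<omega> i] by (auto simp: qq_def q_def)
  have Xnn: "0 \<le> X i \<omega>" for i \<omega>
    unfolding Xsplit using t1[of \<omega> i] t2[of \<omega> i] t3[of \<omega> i] by linarith
  have z1: "(of_bool (FInd N \<pi> \<omega> i) - of_bool (SInd N \<pi> \<omega> i)) * a i (\<omega> i) = 0 \<longleftrightarrow> C1 i \<omega>" for i \<omega>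
    using acts_Sel[of i N \<pi> \<omega>] by (auto simp: a_def C1_def FInd_def SInd_def)
  have z2: "(of_bool (FtInd N \<pi> \<omega> i) - of_bool (StInd N \<pi> \<omega> i)) * b i (\<omega> i) = 0 \<longleftrightarrow> C3 i \<omega>" for i \<omega>
    using acts_Sel[of i N \<pi> \<omega>] by (auto simp: b_def m_def C3_def FtInd_def StInd_def)
  have z3: "(of_bool (PInd N \<pi> \<omega> i) - of_bool (FtInd N \<pi> \<omega> i)) * qq i (\<omega> i) = 0 \<longleftrightarrow> C2' i \<omega>" for i \<omega>
    by (auto simp: qq_def q_def C2'_def FtInd_def)
  have Xzero: "X i \<omega> = 0 \<longleftrightarrow> C1 i \<omega> \<and> C2' i \<omega> \<and> C3 i \<omega>" for i \<omega>
    unfolding Xsplit z1[symmetric] z2[symmetric] z3[symmetric]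
    using t1[of \<omega> i] t2[of \<omega> i] t3[of \<omega> i] by linarith


  have AEG: "AE \<omega> in boxes N D. \<forall>i<N. snd (\<omega> i) \<in> \<Gamma> i \<and> 0 < measure (D i) {x. snd x = snd (\<omega> i)}"
  proof -
    have "AE \<omega> in boxes N D. \<forall>i\<in>{..<N}. snd (\<omega> i) \<in> \<Gamma> i \<and> 0 < measure (D i) {x. snd x = snd (\<omega> i)}"
    proof (rule AE_finite_allI[OF fin])
      fix i assume "i \<in> {..<N}" then have i: "i < N" by simp
      have Pi: "prob_space (D i)" and Si: "sets (D i) = sets (borel \<Otimes>\<^sub>M (count_space UNIV :: 't measure))"
        and Gf: "finite (\<Gamma> i)" and Ga: "AE x in D i. snd x \<in> \<Gamma> i"
        using i prob sets Gamma_fin Gamma_ae by auto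
      interpret Pi: prob_space "D i" by fact
      have "AE y in D i. \<forall>t\<in>\<Gamma> i. measure (D i) {x. snd x = t} = 0 \<longrightarrow> y \<notin> {x. snd x = t}"
      proof (rule AE_finite_allI[OF Gf])
        fix t assume "t \<in> \<Gamma> i"
        show "AE y in D i. measure (D i) {x. snd x = t} = 0 \<longrightarrow> y \<notin> {x. snd x = t}"
        proof (cases "measure (D i) {x. snd x = t} = 0")
          case True
          have "{x. snd x = t} \<in> sets (D i)" using sets_snd[OF Si, of "\<lambda>s. s = t"] by simp
          then have "{x. snd x = t} \<in> null_sets (D i)" using True by (simp add: null_sets_def Pi.emeasure_eq_measure)
          from AE_not_in[OF this] show ?thesis by eventually_elim simp
        next
          case False then show ?thesis by simp
        qed
      qed
      with Ga have AEy: "AE y in D i. snd y \<in> \<Gamma> i \<and> 0 < measure (D i) {x. snd x = snd y}"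
      proof eventually_elim
        case (elim y)
        then have "measure (D i) {x. snd x = snd y} \<noteq> 0" by auto
        then show ?case using elim measure_nonneg[of "D i" "{x. snd x = snd y}"] by linarith
      qed
      have d: "distr (boxes N D) (D i) (\<lambda>\<omega>. \<omega> i) = D i" by (rule distr_PiM_component) (use prob i in auto)
      show "AE \<omega> in boxes N D. snd (\<omega> i) \<in> \<Gamma> i \<and> 0 < measure (D i) {x. snd x = snd (\<omega> i)}"
        using AE_distrD[OF measurable_component_singleton[of i "{..<N}" D], of
            "\<lambda>y. snd y \<in> \<Gamma> i \<and> 0 < measure (D i) {x. snd x = snd y}"] i AEy
        unfolding d by simp
    qed
    then show ?thesis by eventually_elim auto
  qed
  have Gequiv: "C2' i \<omega> = C2 i \<omega>"
    if i: "i < N" and g: "snd (\<omega> i) \<in> \<Gamma> i" "0 < measure (D i) {x. snd x = snd (\<omega> i)}" for i \<omega>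
  proof -
    have Pi: "prob_space (D i)" and Si: "sets (D i) = sets (borel \<Otimes>\<^sub>M (count_space UNIV :: 't measure))"
      and Vi: "integrable (D i) fst" and c: "0 < cF i"
      using i prob sets V_int costs by auto
    have e: "condE (D i) (\<sigma>Ft i (snd (\<omega> i))) (snd (\<omega> i)) = cF i" using sigmaFt i g by auto
    show ?thesis using condE_strict[OF Pi Si Vi g(2) e c, of "\<sigma>P i"] by (simp add: C2_def C2'_def)
  qed
  have sX: "integrable (boxes N D) (\<lambda>\<omega>. \<Sum>i<N. X i \<omega>)"
    by (rule Bochner_Integration.integrable_sum) (use intX in auto)

  have "JK N D \<sigma>F \<sigma>P \<sigma>Ft \<pi> = J N D cF cP \<pi> \<longleftrightarrow> (\<integral>\<omega>. (\<Sum>i<N. X i \<omega>) \<partial>boxes N D) = 0"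
    using J_eq by linarith
  also have "\<dots> \<longleftrightarrow> (AE \<omega> in boxes N D. (\<Sum>i<N. X i \<omega>) = 0)"
    by (rule integral_nonneg_eq_0_iff_AE[OF sX]) (simp add: Xnn sum_nonneg)
  also have "\<dots> \<longleftrightarrow> (AE \<omega> in boxes N D. \<forall>i<N. C1 i \<omega> \<and> C2' i \<omega> \<and> C3 i \<omega>)"
    by (rule AE_cong) (auto simp: sum_nonneg_eq_0_iff Xnn Xzero)
  also have "\<dots> \<longleftrightarrow> (AE \<omega> in boxes N D. \<forall>i<N. C1 i \<omega> \<and> C2 i \<omega> \<and> C3 i \<omega>)"
  proof
    assume "AE \<omega> in boxes N D. \<forall>i<N. C1 i \<omega> \<and> C2' i \<omega> \<and> C3 i \<omega>"
    with AEG show "AE \<omega> in boxes N D. \<forall>i<N. C1 i \<omega> \<and> C2 i \<omega> \<and> C3 i \<omega>"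
      by eventually_elim (use Gequiv in auto)
  next
    assume "AE \<omega> in boxes N D. \<forall>i<N. C1 i \<omega> \<and> C2 i \<omega> \<and> C3 i \<omega>"
    with AEG show "AE \<omega> in boxes N D. \<forall>i<N. C1 i \<omega> \<and> C2' i \<omega> \<and> C3 i \<omega>"
      by eventually_elim (use Gequiv in auto)
  qed
  also have "\<dots> \<longleftrightarrow> cond1 N D \<sigma>F \<pi> \<and> cond2 N D \<sigma>P \<sigma>Ft \<pi> \<and> cond3 N D \<sigma>P \<sigma>Ft \<pi>"
    unfolding cond1_def cond2_def cond3_def C1_def C2_def C3_def AE_conj_iff[symmetric]
    by (rule AE_cong) blast
  finally show ?thesis .
qed
end
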